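(* Let $M=(r,q,u)$ be a floor-randomized mechanism. Then there exists a floor-randomized mechanism $\tilde M=(\tilde r,\tilde q,\tilde u)$ satisfying DD such that $\tilde q(\theta)\le q(\theta)$ for all $\theta>\underline\theta$, $\tilde u(\theta)\le u(\theta)$ for all $\theta$, and $\mathrm{RS}_\alpha(\theta,\tilde M)\ge\mathrm{RS}_\alpha(\theta,M)$ for all $\theta$. Moreover, for every $\theta$ with $q(\theta)>q_e(\theta)$ (with $\theta>\underline\theta$ for the first inequality) the inequalities $\tilde q(\theta)<q(\theta)$ and $\mathrm{RS}_\alpha(\theta,\tilde M)>\mathrm{RS}_\alpha(\theta,M)$ are strict, and if $q(\underline\theta)\neq q_e(\underline\theta)$ then $\mathrm{RS}_\alpha(\underline\theta,\tilde M)>\mathrm{RS}_\alpha(\underline\theta,M)$.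
   Context: Setting. Let $\Theta=[\underline\theta,\overline\theta]$ with $0<\underline\theta<\overline\theta$. Let $c>0$ and let $P:\mathbb R_+\to\mathbb R_+$ be continuous and strictly decreasing with $P(\overline q)=0$ for some $\overline q>0$. Put $V(q)=\int_0^q P(z)\,dz$ and $\mathrm{TS}(\theta,q)=V(q)-c-\theta q$ for $q>0$, $\mathrm{TS}(\theta,0)=0$. Assume (A2): $\mathrm{TS}(\overline\theta,P^{-1}(\overline\theta))>0$. A mechanism is a triple $M=(r,q,u)$ of functions $r:\Theta\to[0,1]$, $q:\Theta\to[0,\overline q]$, $u:\Theta\to\mathbb R$ with $q(\theta)=0$ if and only if $r(\theta)=0$. It is IC if $u(\theta)\ge u(\theta')+(\theta'-\theta)q(\theta')r(\theta')$ for all $\theta,\theta'\in\Theta$, and IR if $u(\theta)\ge 0$ for all $\theta$. (Known fact: $M$ is IC iff $\theta\mapsto q(\theta)r(\theta)$ is nonincreasing and $u(\theta)=u(\overline\theta)+\int_\theta^{\overline\theta}q(z)r(z)\,dz$ for all $\theta$; an IC mechanism is IR iff $u(\overline\theta)\ge0$.) Fix $\alpha\in[0,1)$. The regulator's surplus at $\theta$ is $\mathrm{RS}_\alpha(\theta,M)=r(\theta)\,\mathrm{TS}(\theta,q(\theta))-(1-\alpha)u(\theta)$. The quantity floor $\hat q$ is the unique $q>0$ with $V(q)-qP(q)=c$. A mechanism $(r,q,u)$ is floor-randomized if it is IC, IR, $u(\overline\theta)=0$, and $\Theta$ can be partitioned into three pairwise disjoint (possibly empty) intervals $\Theta_1,\Theta_{01},\Theta_0$,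 with every element of $\Theta_0$ larger than every element of $\Theta_{01}$ and every element of $\Theta_{01}$ larger than every element of $\Theta_1$, such that: $q(\theta)\ge\hat q$ and $r(\theta)=1$ for $\theta\in\Theta_1$; $q(\theta)=\hat q$ and $r(\theta)\in(0,1)$ for $\theta\in\Theta_{01}$; $q(\theta)=r(\theta)=0$ for $\theta\in\Theta_0$. The efficient quantity is $q_e(\theta)=P^{-1}(\theta)$. A mechanism satisfies downward distortion (DD) if $q(\theta)\le q_e(\theta)$ for all $\theta$, with equality at $\theta=\underline\theta$. *)

theory Defs
  imports "HOL-Analysis.Analysis"
begin

definition Theta :: "real \<Rightarrow> real \<Rightarrow> real set" where
  "Theta thl thh = {thl..thh}"

definition V :: "(real \<Rightarrow> real) \<Rightarrow> real \<Rightarrow> real" where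
  "V P q = integral {0..q} P"

definition TS :: "(real \<Rightarrow> real) \<Rightarrow> real \<Rightarrow> real \<Rightarrow> real \<Rightarrow> real" where
  "TS P c th q = (if q > 0 then V P q - c - th * q else 0)"

definition qe :: "(real \<Rightarrow> real) \<Rightarrow> real \<Rightarrow> real" where
  "qe P th = (THE q. q \<ge> 0 \<and> P q = th)"

definition qhat :: "(real \<Rightarrow> real) \<Rightarrow> real \<Rightarrow> real" where
  "qhat P c = (THE q. q > 0 \<and> V P q - q * P q = c)"

definition mechanism :: "real \<Rightarrow> real \<Rightarrow> real \<Rightarrow>
    (real \<Rightarrow> real) \<Rightarrow> (real \<Rightarrow> real) \<Rightarrow> (real \<Rightarrow> real) \<Rightarrow> bool" where
  "mechanism thl thh qbar r q u \<longleftrightarrow>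
     (\<forall>th\<in>Theta thl thh. r th \<in> {0..1} \<and> q th \<in> {0..qbar} \<and> (q th = 0 \<longleftrightarrow> r th = 0))"

definition IC :: "real \<Rightarrow> real \<Rightarrow>
    (real \<Rightarrow> real) \<Rightarrow> (real \<Rightarrow> real) \<Rightarrow> (real \<Rightarrow> real) \<Rightarrow> bool" where
  "IC thl thh r q u \<longleftrightarrow>
     (\<forall>th\<in>Theta thl thh. \<forall>th'\<in>Theta thl thh. u th \<ge> u th' + (th' - th) * q th' * r th')"

definition IR :: "real \<Rightarrow> real \<Rightarrow> (real \<Rightarrow> real) \<Rightarrow> bool" where
  "IR thl thh u \<longleftrightarrow> (\<forall>th\<in>Theta thl thh. u th \<ge> 0)"

definition floor_randomized :: "(real \<Rightarrow> real) \<Rightarrow> real \<Rightarrow> real \<Rightarrow> real \<Rightarrow> real \<Rightarrow>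
    (real \<Rightarrow> real) \<Rightarrow> (real \<Rightarrow> real) \<Rightarrow> (real \<Rightarrow> real) \<Rightarrow> bool" where
  "floor_randomized P c thl thh qbar r q u \<longleftrightarrow>
     mechanism thl thh qbar r q u \<and> IC thl thh r q u \<and> IR thl thh u \<and> u thh = 0 \<and>
     (\<exists>T1 T01 T0 :: real set.
        is_interval T1 \<and> is_interval T01 \<and> is_interval T0 \<and>
        T1 \<inter> T01 = {} \<and> T1 \<inter> T0 = {} \<and> T01 \<inter> T0 = {} \<and>
        T1 \<union> T01 \<union> T0 = Theta thl thh \<and>
        (\<forall>x\<in>T0. \<forall>y\<in>T01. x > y) \<and> (\<forall>x\<in>T01. \<forall>y\<in>T1. x > y) \<and>
        (\<forall>th\<in>T1. q th \<ge> qhat P c \<and> r th = 1) \<and>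
        (\<forall>th\<in>T01. q th = qhat P c \<and> r th \<in> {0<..<1}) \<and>
        (\<forall>th\<in>T0. q th = 0 \<and> r th = 0))"

definition DD :: "(real \<Rightarrow> real) \<Rightarrow> real \<Rightarrow> real \<Rightarrow> (real \<Rightarrow> real) \<Rightarrow> bool" where
  "DD P thl thh q \<longleftrightarrow> (\<forall>th\<in>Theta thl thh. q th \<le> qe P th) \<and> q thl = qe P thl"

definition RS :: "(real \<Rightarrow> real) \<Rightarrow> real \<Rightarrow> real \<Rightarrow> real \<Rightarrow>
    (real \<Rightarrow> real) \<Rightarrow> (real \<Rightarrow> real) \<Rightarrow> (real \<Rightarrow> real) \<Rightarrow> real" where
  "RS P c \<alpha> th r q u = r th * TS P c th (q th) - (1 - \<alpha>) * u th"

end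

theory Submission
  imports Defs
begin


lemma antitone_integrable:
  fixes g :: "real \<Rightarrow> real"
  assumes "\<And>x y. a \<le> x \<Longrightarrow> x \<le> y \<Longrightarrow> y \<le> b \<Longrightarrow> g y \<le> g x"
  shows "g integrable_on {a..b}"
proof -
  have "mono_on {a..b} (\<lambda>x. - g x)" using assms by (auto simp: mono_on_def)
  then have "(\<lambda>x. - g x) integrable_on {a..b}" by (rule integrable_on_mono_on)
  then show ?thesis by (simp add: integrable_neg_iff)
qed

lemma int_upper:
  fixes f :: "real \<Rightarrow> real"
  assumes "f integrable_on {a..b}" "a \<le> b" "\<And>x. x \<in> {a..b} \<Longrightarrow> f x \<le> M"
  shows "integral {a..b} f \<le> (b - a) * M"
proof -
  have "integral {a..b} f \<le> integral {a..b} (\<lambda>x. M)"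
    by (rule integral_le) (use assms in auto)
  then show ?thesis using assms(2) by simp
qed

lemma int_lower:
  fixes f :: "real \<Rightarrow> real"
  assumes "f integrable_on {a..b}" "a \<le> b" "\<And>x. x \<in> {a..b} \<Longrightarrow> M \<le> f x"
  shows "(b - a) * M \<le> integral {a..b} f"
proof -
  have "integral {a..b} (\<lambda>x. M) \<le> integral {a..b} f"
    by (rule integral_le) (use assms in auto)
  then show ?thesis using assms(2) by simp
qed

lemma IC_integral:
  fixes g :: "real \<Rightarrow> real"
  assumes anti: "\<And>x y. a \<le> x \<Longrightarrow> x \<le> y \<Longrightarrow> y \<le> b \<Longrightarrow> g y \<le> g x"
    and x: "x \<in> {a..b}" and y: "y \<in> {a..b}"
  shows "integral {x..b} g \<ge> integral {y..b} g + (y - x) * g y"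
proof -
  have ig: "g integrable_on {a..b}" by (rule antitone_integrable[OF anti])
  show ?thesis
  proof (cases "x \<le> y")
    case True
    have i1: "g integrable_on {x..b}" using ig by (rule integrable_subinterval_real) (use x in auto)
    have i2: "g integrable_on {x..y}" using ig by (rule integrable_subinterval_real) (use x y in auto)
    have c: "integral {x..y} g + integral {y..b} g = integral {x..b} g"
      by (rule Henstock_Kurzweil_Integration.integral_combine) (use True y i1 in auto)
    have "(y - x) * g y \<le> integral {x..y} g"
      by (rule int_lower[OF i2 True]) (use anti x y in auto)
    then show ?thesis using c by linarith
  next
    case False
    have i1: "g integrable_on {y..b}" using ig by (rule integrable_subinterval_real) (use y in auto)
    have i2: "g integrable_on {y..x}" using ig by (rule integrable_subinterval_real) (use x y in auto)
    have c: "integral {y..x} g + integral {x..b} g = integral {y..b} g"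
      by (rule Henstock_Kurzweil_Integration.integral_combine) (use False x i1 in auto)
    have "integral {y..x} g \<le> (x - y) * g y"
      by (rule int_upper[OF i2]) (use anti x y False in auto)
    then show ?thesis using c by (simp add: algebra_simps)
  qed
qed

lemma riemann_bound:
  fixes g u :: "real \<Rightarrow> real"
  assumes anti: "\<And>x y. a \<le> x \<Longrightarrow> x \<le> y \<Longrightarrow> y \<le> b \<Longrightarrow> g y \<le> g x"
    and step: "\<And>x y. a \<le> x \<Longrightarrow> x < y \<Longrightarrow> y \<le> b \<Longrightarrow> u x - u y \<ge> (y - x) * g y"
    and x: "x \<in> {a..b}"
  shows "u x - u b \<ge> integral {x..b} g"
proof -
  have ig: "g integrable_on {a..b}" by (rule antitone_integrable[OF anti])
  have ind: "a \<le> x \<Longrightarrow> x \<le> y \<Longrightarrow> y \<le> b \<Longrightarrow> y - x \<le> real n * h \<Longrightarrow> 0 < h \<Longrightarrow>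
      u x - u y \<ge> integral {x..y} g - h * (g x - g y)" for n h x y
  proof (induction n arbitrary: x y)
    case 0
    then show ?case by simp
  next
    case (Suc n)
    have single: "u x' - u y' \<ge> integral {x'..y'} g - h * (g x' - g y')"
      if "a \<le> x'" "x' \<le> y'" "y' \<le> b" "y' - x' \<le> h" for x' y'
    proof (cases "x' = y'")
      case True then show ?thesis by simp
    next
      case False
      have i2: "g integrable_on {x'..y'}" using ig by (rule integrable_subinterval_real) (use that in auto)
      have "integral {x'..y'} g \<le> (y' - x') * g x'"
        by (rule int_upper[OF i2]) (use anti that in auto)
      moreover have "u x' - u y' \<ge> (y' - x') * g y'" using step[of x' y'] that False by auto
      moreover have "(y' - x') * (g x' - g y') \<le> h * (g x' - g y')"
        by (rule mult_right_mono) (use that anti[of x' y'] in auto)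
      ultimately show ?thesis by (simp add: algebra_simps)
    qed
    show ?case
    proof (cases "y - x \<le> h")
      case True then show ?thesis using single Suc.prems by auto
    next
      case False
      define m where "m = x + h"
      have m: "x \<le> m" "m \<le> y" using False Suc.prems m_def by auto
      have IH: "u m - u y \<ge> integral {m..y} g - h * (g m - g y)"
        using Suc.IH[of m y] Suc.prems m False by (auto simp: m_def algebra_simps)
      have S: "u x - u m \<ge> integral {x..m} g - h * (g x - g m)"
        using single[of x m] Suc.prems m by (auto simp: m_def)
      have i1: "g integrable_on {x..y}" using ig by (rule integrable_subinterval_real) (use Suc.prems in auto)
      have "integral {x..m} g + integral {m..y} g = integral {x..y} g"
        by (rule Henstock_Kurzweil_Integration.integral_combine) (use m i1 in auto)
      then show ?thesis using IH S by (simp add: algebra_simps)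
    qed
  qed
  have bound: "u x - u b \<ge> integral {x..b} g - h * (g x - g b)" if "h > 0" for h
  proof -
    obtain n where "(b - x) / h \<le> real n" using real_arch_simple by blast
    then have "b - x \<le> real n * h" using that by (simp add: field_simps)
    then show ?thesis using ind[of x b n h] x that by auto
  qed
  have D: "g x - g b \<ge> 0" using anti[of x b] x by auto
  show ?thesis
  proof (rule ccontr)
    assume "\<not> ?thesis"
    then have e: "integral {x..b} g - (u x - u b) > 0" by simp
    define h where "h = (integral {x..b} g - (u x - u b)) / (2 * (g x - g b + 1))"
    have hp: "h > 0" using e D by (simp add: h_def)
    have "h * (g x - g b) < integral {x..b} g - (u x - u b)"
    proof -
      have "h * (g x - g b) \<le> h * (g x - g b + 1)" using hp by simp
      also have "\<dots> = (integral {x..b} g - (u x - u b)) / 2" using D by (simp add: h_def field_simps)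
      also have "\<dots> < integral {x..b} g - (u x - u b)" using e by simp
      finally show ?thesis .
    qed
    then show False using bound[OF hp] by simp
  qed
qed


lemma P_int:
  fixes P :: "real \<Rightarrow> real"
  assumes P_cont: "continuous_on {0..} P" and "0 \<le> a"
  shows "P integrable_on {a..b}"
proof -
  have "continuous_on {a..b} P" by (rule continuous_on_subset[OF P_cont]) (use assms in auto)
  then show ?thesis by (rule integrable_continuous_real)
qed

lemma P_le:
  fixes P :: "real \<Rightarrow> real"
  assumes P_decr: "\<And>x y. 0 \<le> x \<Longrightarrow> x < y \<Longrightarrow> P y < P x"
  shows "0 \<le> x \<Longrightarrow> x \<le> y \<Longrightarrow> P y \<le> P x"
  using P_decr[of x y] by (cases "x = y") auto

lemma V_diff:
  fixes P :: "real \<Rightarrow> real"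
  assumes P_cont: "continuous_on {0..} P" and "0 \<le> a" "a \<le> b"
  shows "V P b - V P a = integral {a..b} P"
proof -
  have "integral {0..a} P + integral {a..b} P = integral {0..b} P"
    by (rule Henstock_Kurzweil_Integration.integral_combine) (use assms P_int[OF P_cont, of 0 b] in auto)
  then show ?thesis by (simp add: V_def)
qed

lemma V_upper_strict:
  fixes P :: "real \<Rightarrow> real"
  assumes P_cont: "continuous_on {0..} P"
    and P_decr: "\<And>x y. 0 \<le> x \<Longrightarrow> x < y \<Longrightarrow> P y < P x"
    and "0 \<le> a" "a < b"
  shows "V P b - V P a < (b - a) * P a"
proof -
  define m where "m = (a + b) / 2"
  have m: "a < m" "m < b" using assms by (auto simp: m_def)
  have "V P m - V P a = integral {a..m} P" by (rule V_diff) (use assms m in auto)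
  also have "\<dots> \<le> (m - a) * P a"
    by (rule int_upper) (use assms m P_int[OF P_cont, of a m] in \<open>auto intro: P_le[OF P_decr]\<close>)
  finally have 1: "V P m - V P a \<le> (m - a) * P a" .
  have "V P b - V P m = integral {m..b} P" by (rule V_diff) (use assms m in auto)
  also have "\<dots> \<le> (b - m) * P m"
    by (rule int_upper) (use assms m P_int[OF P_cont, of m b] in \<open>auto intro: P_le[OF P_decr]\<close>)
  also have "\<dots> < (b - m) * P a" using P_decr[of a m] assms m by auto
  finally have 2: "V P b - V P m < (b - m) * P a" .
  show ?thesis using 1 2 by (simp add: algebra_simps)
qed

lemma V_lower_strict:
  fixes P :: "real \<Rightarrow> real"
  assumes P_cont: "continuous_on {0..} P"
    and P_decr: "\<And>x y. 0 \<le> x \<Longrightarrow> x < y \<Longrightarrow> P y < P x"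
    and "0 \<le> a" "a < b"
  shows "V P b - V P a > (b - a) * P b"
proof -
  define m where "m = (a + b) / 2"
  have m: "a < m" "m < b" using assms by (auto simp: m_def)
  have e1: "V P m - V P a = integral {a..m} P" by (rule V_diff) (use assms m in auto)
  have "(m - a) * P m \<le> integral {a..m} P"
    by (rule int_lower) (use assms m P_int[OF P_cont, of a m] in \<open>auto intro: P_le[OF P_decr]\<close>)
  then have 1: "V P m - V P a \<ge> (m - a) * P m" using e1 by simp
  have one_b: "(m - a) * P m > (m - a) * P b" using P_decr[of m b] assms m by auto
  have e2: "V P b - V P m = integral {m..b} P" by (rule V_diff) (use assms m in auto)
  have "(b - m) * P b \<le> integral {m..b} P"
    by (rule int_lower) (use assms m P_int[OF P_cont, of m b] in \<open>auto intro: P_le[OF P_decr]\<close>)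
  then have 2: "V P b - V P m \<ge> (b - m) * P b" using e2 by simp
  show ?thesis using 1 one_b 2 by (simp add: algebra_simps)
qed

lemma qe_unique:
  fixes P :: "real \<Rightarrow> real"
  assumes P_decr: "\<And>x y. 0 \<le> x \<Longrightarrow> x < y \<Longrightarrow> P y < P x"
    and "0 \<le> x" "P x = th"
  shows "qe P th = x"
  unfolding qe_def
proof (rule the_equality)
  show "0 \<le> x \<and> P x = th" using assms by auto
  fix y assume y: "0 \<le> y \<and> P y = th"
  show "y = x"
  proof (rule ccontr)
    assume "y \<noteq> x"
    then have "y < x \<or> x < y" by auto
    then show False using P_decr[of y x] P_decr[of x y] y assms by auto
  qed
qed

lemma qe_spec:
  fixes P :: "real \<Rightarrow> real"
  assumes P_cont: "continuous_on {0..} P"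
    and P_decr: "\<And>x y. 0 \<le> x \<Longrightarrow> x < y \<Longrightarrow> P y < P x"
    and qbar_pos: "qbar > 0" and P_qbar: "P qbar = 0"
    and "0 < th" "th \<le> P 0"
  shows "0 \<le> qe P th \<and> P (qe P th) = th \<and> qe P th < qbar"
proof -
  have "continuous_on {0..qbar} P" by (rule continuous_on_subset[OF P_cont]) auto
  then obtain x where x: "0 \<le> x" "x \<le> qbar" "P x = th"
    using IVT2'[of P qbar th 0] assms by auto
  have "qe P th = x" by (rule qe_unique) (use P_decr x in auto)
  moreover have "x \<noteq> qbar" using x assms by auto
  ultimately show ?thesis using x by auto
qed

lemma TS_max:
  fixes P :: "real \<Rightarrow> real"
  assumes P_cont: "continuous_on {0..} P"
    and P_decr: "\<And>x y. 0 \<le> x \<Longrightarrow> x < y \<Longrightarrow> P y < P x"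
    and "0 \<le> x" "P x = th" "0 \<le> y" "y \<noteq> x"
  shows "V P y - th * y < V P x - th * x"
proof (cases "y < x")
  case True
  have "V P x - V P y > (x - y) * P x" by (rule V_lower_strict) (use assms True in auto)
  then show ?thesis using assms by (simp add: algebra_simps)
next
  case False
  then have "x < y" using assms by auto
  have "V P y - V P x < (y - x) * P x" by (rule V_upper_strict) (use assms \<open>x < y\<close> in auto)
  then show ?thesis using assms by (simp add: algebra_simps)
qed

lemma F_mono:
  fixes P :: "real \<Rightarrow> real"
  assumes P_cont: "continuous_on {0..} P"
    and P_decr: "\<And>x y. 0 \<le> x \<Longrightarrow> x < y \<Longrightarrow> P y < P x"
    and "0 \<le> a" "a < b"
  shows "V P a - a * P a < V P b - b * P b"
proof -
  have "V P b - V P a > (b - a) * P b" by (rule V_lower_strict) (use assms in auto)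
  moreover have "P b < P a" using P_decr[of a b] assms by simp
  then have "P b \<le> P a" by simp
  then have "a * P b \<le> a * P a" using assms by (simp add: mult_left_mono)
  ultimately show ?thesis by (simp add: algebra_simps)
qed

lemma qhat_spec:
  fixes P :: "real \<Rightarrow> real"
  assumes P_cont: "continuous_on {0..} P"
    and P_decr: "\<And>x y. 0 \<le> x \<Longrightarrow> x < y \<Longrightarrow> P y < P x"
    and c: "c > 0" and x: "0 \<le> x" "V P x - x * P x > c"
  shows "0 < qhat P c \<and> qhat P c < x \<and> V P (qhat P c) - qhat P c * P (qhat P c) = c"
proof -
  have V0: "V P 0 = 0" by (simp add: V_def)
  have cV: "continuous_on {0..x} (V P)"
    unfolding V_def[abs_def] by (rule indefinite_integral_continuous_1) (rule P_int[OF P_cont]; simp)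
  have cP: "continuous_on {0..x} P" by (rule continuous_on_subset[OF P_cont]) auto
  have "continuous_on {0..x} (\<lambda>q. V P q - q * P q)"
    by (intro continuous_intros cV cP)
  then obtain y where y: "0 \<le> y" "y \<le> x" "V P y - y * P y = c"
    using IVT'[of "\<lambda>q. V P q - q * P q" 0 c x] x c V0 by auto
  have y0: "y \<noteq> 0" using y V0 c by auto
  have yx: "y \<noteq> x" using y x by auto
  have "qhat P c = y"
    unfolding qhat_def
  proof (rule the_equality)
    show "0 < y \<and> V P y - y * P y = c" using y y0 by auto
    fix z assume z: "0 < z \<and> V P z - z * P z = c"
    show "z = y"
    proof (rule ccontr)
      assume "z \<noteq> y"
      then have "z < y \<or> y < z" by auto
      then show False using F_mono[OF P_cont P_decr, of z y] F_mono[OF P_cont P_decr, of y z] y z by auto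
    qed
  qed
  then show ?thesis using y y0 yx by auto
qed


theorem lemma4:
  fixes P :: "real \<Rightarrow> real" and c thl thh qbar \<alpha> :: real
    and r q u :: "real \<Rightarrow> real"
  assumes thl_pos: "0 < thl" and thl_thh: "thl < thh"
    and c_pos: "c > 0"
    and P_cont: "continuous_on {0..} P"
    and P_decr: "\<And>x y. 0 \<le> x \<Longrightarrow> x < y \<Longrightarrow> P y < P x"
    and qbar_pos: "qbar > 0" and P_qbar: "P qbar = 0"
    and thh_range: "thh \<le> P 0"
    and A2: "TS P c thh (qe P thh) > 0"
    and alpha: "0 \<le> \<alpha>" "\<alpha> < 1"
    and M: "floor_randomized P c thl thh qbar r q u"
  shows "\<exists>r' q' u' :: real \<Rightarrow> real.
           floor_randomized P c thl thh qbar r' q' u' \<and> DD P thl thh q' \<and>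
           (\<forall>th\<in>Theta thl thh. th > thl \<longrightarrow> q' th \<le> q th) \<and>
           (\<forall>th\<in>Theta thl thh. u' th \<le> u th) \<and>
           (\<forall>th\<in>Theta thl thh. RS P c \<alpha> th r' q' u' \<ge> RS P c \<alpha> th r q u) \<and>
           (\<forall>th\<in>Theta thl thh. q th > qe P th \<longrightarrow>
              (th > thl \<longrightarrow> q' th < q th) \<and> RS P c \<alpha> th r' q' u' > RS P c \<alpha> th r q u) \<and>
           (q thl \<noteq> qe P thl \<longrightarrow> RS P c \<alpha> thl r' q' u' > RS P c \<alpha> thl r q u)"
proof -
  have Th: "Theta thl thh = {thl..thh}" by (simp add: Theta_def)
  define qh where "qh = qhat P c"
  from M obtain T1 T01 T0 where
    mech: "mechanism thl thh qbar r q u" and IC: "IC thl thh r q u" and IR: "IR thl thh u"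
    and uthh: "u thh = 0"
    and iv: "is_interval T1" "is_interval T01" "is_interval T0"
    and dj: "T1 \<inter> T01 = {}" "T1 \<inter> T0 = {}" "T01 \<inter> T0 = {}"
    and un: "T1 \<union> T01 \<union> T0 = {thl..thh}"
    and o1: "\<forall>x\<in>T0. \<forall>y\<in>T01. x > y" and o2: "\<forall>x\<in>T01. \<forall>y\<in>T1. x > y"
    and s1: "\<forall>th\<in>T1. q th \<ge> qh \<and> r th = 1"
    and s01: "\<forall>th\<in>T01. q th = qh \<and> r th \<in> {0<..<1}"
    and s0: "\<forall>th\<in>T0. q th = 0 \<and> r th = 0"
    unfolding floor_randomized_def Th qh_def by blast
  have mechF: "\<And>th. th \<in> {thl..thh} \<Longrightarrow> 0 \<le> r th \<and> r th \<le> 1 \<and> 0 \<le> q th \<and> q th \<le> qbar \<and> (q th = 0 \<longleftrightarrow> r th = 0)"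
    using mech unfolding mechanism_def Th by auto
  have ICF: "\<And>x y. x \<in> {thl..thh} \<Longrightarrow> y \<in> {thl..thh} \<Longrightarrow> u x \<ge> u y + (y - x) * (q y * r y)"
    using IC unfolding IC_def Th by (simp add: mult.assoc)
  have thh_lt: "thh < P 0"
  proof (rule ccontr)
    assume "\<not> thh < P 0"
    then have "thh = P 0" using thh_range by simp
    then have "qe P thh = 0" using qe_unique[OF P_decr, where x=0 and th=thh] by simp
    then show False using A2 by (simp add: TS_def)
  qed
  have qeS: "0 < qe P th \<and> P (qe P th) = th \<and> qe P th < qbar" if "th \<in> {thl..thh}" for th
  proof -
    have "0 \<le> qe P th \<and> P (qe P th) = th \<and> qe P th < qbar"
      by (rule qe_spec[OF P_cont P_decr qbar_pos P_qbar]) (use that thl_pos thh_lt in auto)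
    moreover have "qe P th \<noteq> 0" using calculation that thh_lt by auto
    ultimately show ?thesis by auto
  qed
  have qe_anti: "qe P b \<le> qe P a" if "a \<in> {thl..thh}" "b \<in> {thl..thh}" "a \<le> b" for a b
  proof (rule ccontr)
    assume "\<not> ?thesis"
    then have "P (qe P b) < P (qe P a)" using P_decr[of "qe P a" "qe P b"] qeS[OF that(1)] by auto
    then show False using qeS[OF that(1)] qeS[OF that(2)] that by auto
  qed
  have TSqe_ge: "TS P c th (qe P th) \<ge> TS P c th y" if "th \<in> {thl..thh}" "y > 0" for th y
  proof (cases "y = qe P th")
    case False
    have "V P y - th * y < V P (qe P th) - th * qe P th"
      by (rule TS_max[OF P_cont P_decr]) (use qeS[OF that(1)] that False in auto)
    then show ?thesis using that qeS[OF that(1)] by (simp add: TS_def)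
  qed simp
  have TSpos: "TS P c th (qe P th) > 0" if "th \<in> {thl..thh}" for th
  proof -
    have h: "thh \<in> {thl..thh}" using thl_thh by auto
    have q0: "qe P thh > 0" using qeS[OF h] by simp
    have "TS P c th (qe P thh) = V P (qe P thh) - c - th * qe P thh" using q0 by (simp add: TS_def)
    also have "\<dots> \<ge> V P (qe P thh) - c - thh * qe P thh"
      using that q0 by (simp add: mult_right_mono)
    also have "V P (qe P thh) - c - thh * qe P thh = TS P c thh (qe P thh)" using q0 by (simp add: TS_def)
    finally have "TS P c th (qe P thh) \<ge> TS P c thh (qe P thh)" .
    then show ?thesis using TSqe_ge[OF that q0] A2 by linarith
  qed
  have TSq: "TS P c th y < TS P c th (qe P th)" if "th \<in> {thl..thh}" "0 \<le> y" "y \<noteq> qe P th" for th y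
  proof (cases "y = 0")
    case True then show ?thesis using TSpos[OF that(1)] by (simp add: TS_def)
  next
    case False
    have "V P y - th * y < V P (qe P th) - th * qe P th"
      by (rule TS_max[OF P_cont P_decr]) (use qeS[OF that(1)] that False in auto)
    then show ?thesis using that qeS[OF that(1)] False by (simp add: TS_def)
  qed
  have qh: "0 < qh \<and> qh < qe P thh"
  proof -
    have h: "thh \<in> {thl..thh}" using thl_thh by auto
    have "V P (qe P thh) - qe P thh * P (qe P thh) > c"
      using A2 qeS[OF h] by (simp add: TS_def algebra_simps)
    then show ?thesis unfolding qh_def using qhat_spec[OF P_cont P_decr c_pos, of "qe P thh"] qeS[OF h] by auto
  qed
  have qh_lt: "qh < qe P th" if "th \<in> {thl..thh}" for th
    using qh qe_anti[OF that, of thh] thl_thh that by auto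
  have inT: "th \<in> T1 \<or> th \<in> T01 \<or> th \<in> T0" if "th \<in> {thl..thh}" for th using un that by auto
  have subT: "T1 \<subseteq> {thl..thh}" "T01 \<subseteq> {thl..thh}" "T0 \<subseteq> {thl..thh}" using un by auto
  have g_anti: "q b * r b \<le> q a * r a" if "a \<in> {thl..thh}" "b \<in> {thl..thh}" "a \<le> b" for a b
  proof -
    have "u a \<ge> u b + (b - a) * (q b * r b)" "u b \<ge> u a + (a - b) * (q a * r a)"
      using ICF that by auto
    then have "(b - a) * (q b * r b - q a * r a) \<le> 0" by (simp add: algebra_simps)
    then show ?thesis using that by (cases "a = b") (auto simp: mult_le_0_iff)
  qed
  have o3: "x > y" if "x \<in> T0" "y \<in> T1" for x y
  proof (rule ccontr)
    assume "\<not> x > y"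
    then have "x \<le> y" by simp
    then have "q y * r y \<le> q x * r x" using g_anti[of x y] subT that by blast
    then show False using s0 s1 that qh by fastforce
  qed
  have r_anti: "r b \<le> r a" if A: "a \<in> {thl..thh}" and B: "b \<in> {thl..thh}" and ab: "a \<le> b" for a b
  proof -
    consider "b \<in> T0" | "b \<in> T01" | "b \<in> T1" using inT[OF B] by blast
    then show ?thesis
    proof cases
      case 1 then show ?thesis using s0 mechF A B ab by auto
    next
      case 2
      consider "a \<in> T1" | "a \<in> T01" | "a \<in> T0" using inT[OF A] by blast
      then show ?thesis
      proof cases
        case 1 then show ?thesis using s1 mechF A B ab by auto
      next
        case a: 2
        have "qh * r b \<le> qh * r a" using g_anti[OF A B ab] s01 a 2 by auto
        then show ?thesis using qh by simp
      next
        case 3 then show ?thesis using o1 2 A B ab by fastforce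
      qed
    next
      case 3
      consider "a \<in> T1" | "a \<in> T01" | "a \<in> T0" using inT[OF A] by blast
      then show ?thesis
      proof cases
        case 1 then show ?thesis using s1 3 by auto
      next
        case 2 then show ?thesis using o2 3 A B ab by fastforce
      next
        case a: 3 then show ?thesis using o3[OF a 3] A B ab by auto
      qed
    qed
  qed
  define q' where "q' = (\<lambda>th. if th = thl then qe P th else min (q th) (qe P th))"
  define r' where "r' = (\<lambda>th. if th = thl then 1 else r th)"
  define g' where "g' = (\<lambda>th. q' th * r' th)"
  define u' where "u' = (\<lambda>th. integral {th..thh} g')"
  have g'_anti: "g' b \<le> g' a" if "thl \<le> a" "a \<le> b" "b \<le> thh" for a b
  proof (cases "a = b")
    case True then show ?thesis by simp
  next
    case False
    have A: "a \<in> {thl..thh}" and B: "b \<in> {thl..thh}" using that by auto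
    have bn: "b \<noteq> thl" using that False by auto
    have gb: "g' b = min (q b) (qe P b) * r b" using bn by (simp add: g'_def q'_def r'_def)
    have rb: "0 \<le> r b" "r b \<le> 1" using mechF[OF B] by auto
    have ra: "0 \<le> r a" "r a \<le> 1" using mechF[OF A] by auto
    have qeab: "qe P b \<le> qe P a" using qe_anti[OF A B] that by simp
    have qepos: "0 < qe P b" using qeS[OF B] by simp
    have gb_le1: "g' b \<le> q b * r b" using gb rb by (simp add: mult_right_mono)
    have gb_le2: "g' b \<le> qe P b * r b" using gb rb by (simp add: mult_right_mono)
    have rab: "r b \<le> r a" using r_anti[OF A B] that by simp
    have "qe P b * r b \<le> qe P a * r a"
      by (rule mult_mono) (use qeab rab qepos rb in auto)
    show ?thesis
    proof (cases "a = thl")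
      case True
      have "qe P b * r b \<le> qe P b" using qepos rb by (simp add: mult_left_le)
      then show ?thesis using True gb_le2 qeab by (simp add: g'_def q'_def r'_def)
    next
      case an: False
      show ?thesis
      proof (cases "q a \<le> qe P a")
        case True
        then have "g' a = q a * r a" using an by (simp add: g'_def q'_def r'_def)
        then show ?thesis using gb_le1 g_anti[OF A B] that by simp
      next
        case False
        then have "g' a = qe P a * r a" using an by (simp add: g'_def q'_def r'_def)
        then show ?thesis using gb_le2 \<open>qe P b * r b \<le> qe P a * r a\<close> by simp
      qed
    qed
  qed
  have g'_nonneg: "0 \<le> g' th" if "th \<in> {thl..thh}" for th
    using mechF[OF that] qeS[OF that] by (auto simp: g'_def q'_def r'_def)
  have IC': "IC thl thh r' q' u'"
    unfolding IC_def Th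
  proof (intro ballI)
    fix x y assume x: "x \<in> {thl..thh}" and y: "y \<in> {thl..thh}"
    have "integral {x..thh} g' \<ge> integral {y..thh} g' + (y - x) * g' y"
      by (rule IC_integral[OF g'_anti x y])
    then show "u' x \<ge> u' y + (y - x) * q' y * r' y" by (simp add: u'_def g'_def mult.assoc)
  qed
  have IR': "IR thl thh u'"
    unfolding IR_def Th
  proof
    fix th assume th: "th \<in> {thl..thh}"
    have "g' integrable_on {th..thh}" by (rule antitone_integrable) (use g'_anti th in auto)
    then show "0 \<le> u' th" unfolding u'_def by (rule integral_nonneg) (use g'_nonneg th in auto)
  qed
  have u'thh: "u' thh = 0" by (simp add: u'_def)
  have mech': "mechanism thl thh qbar r' q' u'"
    unfolding mechanism_def Th
  proof
    fix th assume th: "th \<in> {thl..thh}"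
    show "r' th \<in> {0..1} \<and> q' th \<in> {0..qbar} \<and> (q' th = 0) = (r' th = 0)"
      using mechF[OF th] qeS[OF th] by (auto simp: q'_def r'_def min_def)
  qed
  have part': "\<exists>T1 T01 T0 :: real set.
        is_interval T1 \<and> is_interval T01 \<and> is_interval T0 \<and>
        T1 \<inter> T01 = {} \<and> T1 \<inter> T0 = {} \<and> T01 \<inter> T0 = {} \<and>
        T1 \<union> T01 \<union> T0 = Theta thl thh \<and>
        (\<forall>x\<in>T0. \<forall>y\<in>T01. x > y) \<and> (\<forall>x\<in>T01. \<forall>y\<in>T1. x > y) \<and>
        (\<forall>th\<in>T1. q' th \<ge> qhat P c \<and> r' th = 1) \<and>
        (\<forall>th\<in>T01. q' th = qhat P c \<and> r' th \<in> {0<..<1}) \<and>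
        (\<forall>th\<in>T0. q' th = 0 \<and> r' th = 0)"
  proof (rule exI[of _ "insert thl T1"], rule exI[of _ "T01 - {thl}"], rule exI[of _ "T0 - {thl}"], intro conjI)
    show "is_interval (insert thl T1)"
      unfolding is_interval_1
    proof (intro ballI allI impI)
      fix a b x assume a: "a \<in> insert thl T1" and b: "b \<in> insert thl T1" and x: "a \<le> x \<and> x \<le> b"
      show "x \<in> insert thl T1"
      proof (cases "x = thl")
        case False
        have aT: "a \<in> {thl..thh}" "b \<in> {thl..thh}" using a b subT thl_thh by auto
        then have bT1: "b \<in> T1" using b x False by auto
        have xT: "x \<in> {thl..thh}" using aT x by auto
        have "x \<notin> T01" using o2 bT1 x by fastforce
        moreover have "x \<notin> T0" using o3 bT1 x by fastforce
        ultimately show ?thesis using inT[OF xT] by auto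
      qed simp
    qed
    have rm: "is_interval (S - {thl})" if "is_interval S" "S \<subseteq> {thl..thh}" for S
      unfolding is_interval_1
    proof (intro ballI allI impI)
      fix a b x assume a: "a \<in> S - {thl}" and b: "b \<in> S - {thl}" and x: "a \<le> x \<and> x \<le> b"
      have "x \<in> S" using that(1) a b x unfolding is_interval_1 by blast
      moreover have "a > thl" using a that(2) by force
      ultimately show "x \<in> S - {thl}" using x by auto
    qed
    show "is_interval (T01 - {thl})" by (rule rm) (use iv subT in auto)
    show "is_interval (T0 - {thl})" by (rule rm) (use iv subT in auto)
    show "insert thl T1 \<inter> (T01 - {thl}) = {}" using dj by auto
    show "insert thl T1 \<inter> (T0 - {thl}) = {}" using dj by auto
    show "(T01 - {thl}) \<inter> (T0 - {thl}) = {}" using dj by auto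
    show "insert thl T1 \<union> (T01 - {thl}) \<union> (T0 - {thl}) = Theta thl thh"
      using un thl_thh by (auto simp: Th)
    show "\<forall>x\<in>T0 - {thl}. \<forall>y\<in>T01 - {thl}. y < x" using o1 by auto
    show "\<forall>x\<in>T01 - {thl}. \<forall>y\<in>insert thl T1. y < x"
      using o2 subT by fastforce
    show "\<forall>th\<in>insert thl T1. qhat P c \<le> q' th \<and> r' th = 1"
    proof
      fix th assume th: "th \<in> insert thl T1"
      then have thT: "th \<in> {thl..thh}" using subT thl_thh by auto
      show "qhat P c \<le> q' th \<and> r' th = 1"
        using th s1 qh_lt[OF thT] unfolding qh_def by (auto simp: q'_def r'_def)
    qed
    show "\<forall>th\<in>T01 - {thl}. q' th = qhat P c \<and> r' th \<in> {0<..<1}"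
    proof
      fix th assume th: "th \<in> T01 - {thl}"
      then have thT: "th \<in> {thl..thh}" using subT by auto
      show "q' th = qhat P c \<and> r' th \<in> {0<..<1}"
        using th s01 qh_lt[OF thT] unfolding qh_def by (auto simp: q'_def r'_def)
    qed
    show "\<forall>th\<in>T0 - {thl}. q' th = 0 \<and> r' th = 0"
    proof
      fix th assume th: "th \<in> T0 - {thl}"
      then have thT: "th \<in> {thl..thh}" using subT by auto
      show "q' th = 0 \<and> r' th = 0"
        using th s0 qeS[OF thT] by (auto simp: q'_def r'_def)
    qed
  qed
  have FR': "floor_randomized P c thl thh qbar r' q' u'"
    unfolding floor_randomized_def using mech' IC' IR' u'thh part' by blast
  have DD': "DD P thl thh q'"
    unfolding DD_def Th by (auto simp: q'_def)
  have qle: "\<forall>th\<in>Theta thl thh. th > thl \<longrightarrow> q' th \<le> q th"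
    by (auto simp: q'_def)
  have ule: "u' th \<le> u th" if th: "th \<in> {thl..thh}" for th
  proof -
    have "u th - u thh \<ge> integral {th..thh} g'"
    proof (rule riemann_bound[OF g'_anti _ th])
      fix x y assume xy: "thl \<le> x" "x < y" "y \<le> thh"
      have X: "x \<in> {thl..thh}" and Y: "y \<in> {thl..thh}" using xy by auto
      have "u x \<ge> u y + (y - x) * (q y * r y)" using ICF[OF X Y] .
      moreover have "g' y \<le> q y * r y" using xy mechF[OF Y]
        by (auto simp: g'_def q'_def r'_def intro: mult_right_mono)
      then have "(y - x) * g' y \<le> (y - x) * (q y * r y)" using xy by (simp add: mult_left_mono)
      ultimately show "(y - x) * g' y \<le> u x - u y" by simp
    qed
    then show ?thesis using uthh by (simp add: u'_def)
  qed
  have key: "r' th * TS P c th (q' th) \<ge> r th * TS P c th (q th) \<and>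
      ((q th > qe P th \<or> (th = thl \<and> q th \<noteq> qe P th)) \<longrightarrow>
        r' th * TS P c th (q' th) > r th * TS P c th (q th))"
    if th: "th \<in> {thl..thh}" for th
  proof (cases "th = thl")
    case True
    have e: "r' th * TS P c th (q' th) = TS P c th (qe P th)" using True by (simp add: q'_def r'_def)
    have rr: "0 \<le> r th" "r th \<le> 1" "0 \<le> q th" using mechF[OF th] by auto
    have pos: "TS P c th (qe P th) > 0" using TSpos[OF th] .
    have A: "r th * TS P c th (q th) \<le> TS P c th (qe P th)"
    proof (cases "q th = qe P th")
      case True
      then show ?thesis using rr pos by (simp add: mult_left_le_one_le)
    next
      case False
      have lt: "TS P c th (q th) < TS P c th (qe P th)" using TSq[OF th rr(3) False] .
      show ?thesis
      proof (cases "TS P c th (q th) \<ge> 0")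
        case True
        then have "r th * TS P c th (q th) \<le> TS P c th (q th)" using rr by (simp add: mult_left_le_one_le)
        then show ?thesis using lt by simp
      next
        case False
        then have "r th * TS P c th (q th) \<le> 0" using rr by (simp add: mult_nonneg_nonpos)
        then show ?thesis using pos by simp
      qed
    qed
    have B: "q th \<noteq> qe P th \<longrightarrow> r th * TS P c th (q th) < TS P c th (qe P th)"
    proof
      assume ne: "q th \<noteq> qe P th"
      have lt: "TS P c th (q th) < TS P c th (qe P th)" using TSq[OF th rr(3) ne] .
      show "r th * TS P c th (q th) < TS P c th (qe P th)"
      proof (cases "TS P c th (q th) \<ge> 0")
        case True
        then have "r th * TS P c th (q th) \<le> TS P c th (q th)" using rr by (simp add: mult_left_le_one_le)
        then show ?thesis using lt by simp
      next
        case False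
        then have "r th * TS P c th (q th) \<le> 0" using rr by (simp add: mult_nonneg_nonpos)
        then show ?thesis using pos by simp
      qed
    qed
    show ?thesis using A B e True by auto
  next
    case False
    show ?thesis
    proof (cases "q th \<le> qe P th")
      case True
      then show ?thesis using False by (simp add: q'_def r'_def)
    next
      case qgt: False
      have e: "r' th * TS P c th (q' th) = r th * TS P c th (qe P th)" using False qgt by (simp add: q'_def r'_def)
      have rr: "0 \<le> r th" "0 \<le> q th" using mechF[OF th] by auto
      have "q th \<noteq> 0" using qgt qeS[OF th] by auto
      then have rpos: "r th > 0" using mechF[OF th] by auto
      have lt: "TS P c th (q th) < TS P c th (qe P th)" using TSq[OF th rr(2)] qgt by auto
      have "r th * TS P c th (q th) < r th * TS P c th (qe P th)"
        using rpos lt by (simp add: mult_strict_left_mono)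
      then show ?thesis using e by auto
    qed
  qed
  have RSge: "RS P c \<alpha> th r' q' u' \<ge> RS P c \<alpha> th r q u" if th: "th \<in> {thl..thh}" for th
  proof -
    have "(1 - \<alpha>) * u' th \<le> (1 - \<alpha>) * u th" using ule[OF th] alpha by (simp add: mult_left_mono)
    then show ?thesis using key[OF th] by (simp add: RS_def)
  qed
  have RSgt: "RS P c \<alpha> th r' q' u' > RS P c \<alpha> th r q u"
    if th: "th \<in> {thl..thh}" and h: "q th > qe P th \<or> (th = thl \<and> q th \<noteq> qe P th)" for th
  proof -
    have "(1 - \<alpha>) * u' th \<le> (1 - \<alpha>) * u th" using ule[OF th] alpha by (simp add: mult_left_mono)
    then show ?thesis using key[OF th] h by (simp add: RS_def)
  qed
  have thlT: "thl \<in> {thl..thh}" using thl_thh by auto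
  show ?thesis
    apply (rule exI[of _ r'], rule exI[of _ q'], rule exI[of _ u'])
    using FR' DD' qle ule RSge RSgt[OF thlT] RSgt unfolding Th
    by (auto simp: q'_def)
qed

end
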